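(* Let $X$ be a Polish space, let $\mathcal{U}\subseteq K(X)$ be open, dense and hereditary, and let $\varepsilon>0$. Then the set \[ G_{\mathcal{U},\varepsilon}=\{\mu\in P(X): \exists K\in\mathcal{U} \text{ with } \mu(K)\geq 1-\varepsilon\} \] is co-meager in $P(X)$.
   Context: $K(X)$ denotes the hyperspace of all compact subsets of $X$ with the Vietoris topology; $P(X)$ denotes the space of Borel probability measures on $X$ with the weak* topology. A subset $\mathcal{U}\subseteq K(X)$ is hereditary if whenever $K\in\mathcal{U}$ and $C\in K(X)$ with $C\subseteq K$, then $C\in\mathcal{U}$. *)

theory Defs
  imports "HOL-Analysis.Analysis" "HOL-Probability.Probability"
begin

text \<open>K(X): the compact subsets of X (including the empty set).\<close>
definition compacts :: "'a::topological_space set set" where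
  "compacts = {K. compact K}"

definition vietoris :: "'a::topological_space set topology" where
  "vietoris = topology_generated_by
     ({{K \<in> compacts. K \<subseteq> U} | U. open U} \<union> {{K \<in> compacts. K \<inter> U \<noteq> {}} | U. open U})"

definition prob_measures :: "'a::topological_space measure set" where
  "prob_measures = {M. prob_space M \<and> sets M = sets borel}"

definition weak_topology :: "'a::topological_space measure topology" where
  "weak_topology = topology_generated_by
     {{M \<in> prob_measures. (\<integral>x. f x \<partial>M) \<in> V} | f V.
        continuous_on UNIV (f :: 'a \<Rightarrow> real) \<and> bounded (range f) \<and> open V}"

definition nowhere_dense_in :: "'a topology \<Rightarrow> 'a set \<Rightarrow> bool" where
  "nowhere_dense_in T S \<longleftrightarrow> S \<subseteq> topspace T \<and> T interior_of (T closure_of S) = {}"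

definition meager_in :: "'a topology \<Rightarrow> 'a set \<Rightarrow> bool" where
  "meager_in T S \<longleftrightarrow> (\<exists>F. countable F \<and> (\<forall>N\<in>F. nowhere_dense_in T N) \<and> S \<subseteq> \<Union>F)"

definition comeager_in :: "'a topology \<Rightarrow> 'a set \<Rightarrow> bool" where
  "comeager_in T S \<longleftrightarrow> S \<subseteq> topspace T \<and> meager_in T (topspace T - S)"

definition hereditary_compacts :: "'a::topological_space set set \<Rightarrow> bool" where
  "hereditary_compacts \<U> \<longleftrightarrow> (\<forall>K\<in>\<U>. \<forall>C\<in>compacts. C \<subseteq> K \<longrightarrow> C \<in> \<U>)"

end

theory Submission
  imports Defs
begin

definition vsub :: "'a::topological_space set set set" where
  "vsub = ({{K \<in> compacts. K \<subseteq> U} | U. open U} \<union> {{K \<in> compacts. K \<inter> U \<noteq> {}} | U. open U})"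

lemma vietoris_vsub: "vietoris = topology_generated_by vsub"
  unfolding vietoris_def vsub_def ..

lemma vsub1: "open U \<Longrightarrow> {K \<in> compacts. K \<subseteq> U} \<in> vsub"
  unfolding vsub_def by (rule UnI1, rule CollectI, rule exI[of _ U]) simp

lemma vsub2: "open U \<Longrightarrow> {K \<in> compacts. K \<inter> U \<noteq> {}} \<in> vsub"
  unfolding vsub_def by (rule UnI2, rule CollectI, rule exI[of _ U]) simp

lemma vsubE: "s \<in> vsub \<Longrightarrow> (\<And>U. open U \<Longrightarrow> s = {K \<in> compacts. K \<subseteq> U} \<Longrightarrow> P)
   \<Longrightarrow> (\<And>U. open U \<Longrightarrow> s = {K \<in> compacts. K \<inter> U \<noteq> {}} \<Longrightarrow> P) \<Longrightarrow> P"
  unfolding vsub_def by blast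

definition vnbhd where
  "vnbhd W K \<longleftrightarrow> (\<exists>V \<V>. open V \<and> K \<subseteq> V \<and> finite \<V> \<and> (\<forall>Q\<in>\<V>. open Q \<and> K \<inter> Q \<noteq> {})
     \<and> (\<forall>C. compact C \<and> C \<subseteq> V \<and> (\<forall>Q\<in>\<V>. C \<inter> Q \<noteq> {}) \<longrightarrow> C \<in> W))"

lemma vnbhd_mono:
  assumes "vnbhd W K" "W \<subseteq> W'" shows "vnbhd W' K"
  using assms(1) unfolding vnbhd_def
  apply (elim exE conjE)
  subgoal for V \<V> apply (rule exI[of _ V], rule exI[of _ \<V>]) using assms(2) by auto
  done

lemma vnbhd_Int:
  assumes "vnbhd W K" "vnbhd W' K" shows "vnbhd (W \<inter> W') K"
proof -
  from assms(1) obtain V1 \<V>1 where 1: "open V1" "K \<subseteq> V1" "finite \<V>1" "\<forall>Q\<in>\<V>1. open Q \<and> K \<inter> Q \<noteq> {}"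
     "\<forall>C. compact C \<and> C \<subseteq> V1 \<and> (\<forall>Q\<in>\<V>1. C \<inter> Q \<noteq> {}) \<longrightarrow> C \<in> W"
    unfolding vnbhd_def by (elim exE conjE) 
  from assms(2) obtain V2 \<V>2 where 2: "open V2" "K \<subseteq> V2" "finite \<V>2" "\<forall>Q\<in>\<V>2. open Q \<and> K \<inter> Q \<noteq> {}"
     "\<forall>C. compact C \<and> C \<subseteq> V2 \<and> (\<forall>Q\<in>\<V>2. C \<inter> Q \<noteq> {}) \<longrightarrow> C \<in> W'"
    unfolding vnbhd_def by (elim exE conjE) 
  show ?thesis unfolding vnbhd_def
    apply (rule exI[of _ "V1 \<inter> V2"], rule exI[of _ "\<V>1 \<union> \<V>2"])
    apply (intro conjI)
         apply (simp add: open_Int 1 2)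
        apply (simp add: 1 2)
       apply (simp add: 1 2)
      apply (simp add: ball_Un 1 2)
    apply (intro allI impI)
    apply (elim conjE)
    apply (rule IntI)
    using 1(5) 2(5) apply (simp_all add: ball_Un)
    done
qed

lemma vietoris_nbhd:
  assumes "openin vietoris W" "K \<in> W"
  shows "vnbhd W K"
proof -
  have "generate_topology_on vsub W"
    using assms(1) unfolding vietoris_vsub by (rule openin_topology_generated_by)
  then show ?thesis using assms(2)
  proof (induction arbitrary: K rule: generate_topology_on.induct)
    case Empty
    then show ?case by simp
  next
    case (Int a b)
    then show ?case by (simp add: vnbhd_Int)
  next
    case (UN \<K>)
    then obtain k where "k \<in> \<K>" "K \<in> k" by blast
    then have "vnbhd k K" using UN.IH by blast
    then show ?case by (rule vnbhd_mono) (use \<open>k \<in> \<K>\<close> in blast)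
  next
    case (Basis s)
    from Basis.hyps show ?case
    proof (rule vsubE)
      fix U assume U: "open U" "s = {K \<in> compacts. K \<subseteq> U}"
      show ?thesis unfolding vnbhd_def
        apply (rule exI[of _ U], rule exI[of _ "{}"]) using U Basis.prems by (auto simp: compacts_def)
    next
      fix U assume U: "open U" "s = {K \<in> compacts. K \<inter> U \<noteq> {}}"
      show ?thesis unfolding vnbhd_def
        apply (rule exI[of _ UNIV], rule exI[of _ "{U}"]) using U Basis.prems by (auto simp: compacts_def)
    qed
  qed
qed

lemma hered_open:
  fixes \<U> :: "'a::topological_space set set"
  assumes "openin vietoris \<U>" "hereditary_compacts \<U>" "K \<in> \<U>"
  shows "\<exists>V. open V \<and> K \<subseteq> V \<and> (\<forall>C. compact C \<and> C \<subseteq> V \<longrightarrow> C \<in> \<U>)"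
proof -
  obtain V \<V> where V: "open V" "K \<subseteq> V" "finite \<V>" "\<forall>Q\<in>\<V>. open Q \<and> K \<inter> Q \<noteq> {}"
     "\<forall>C. compact C \<and> C \<subseteq> V \<and> (\<forall>Q\<in>\<V>. C \<inter> Q \<noteq> {}) \<longrightarrow> C \<in> \<U>"
    using vietoris_nbhd[OF assms(1,3)] unfolding vnbhd_def by (elim exE conjE)
  define p where "p Q = (SOME x. x \<in> K \<inter> Q)" for Q
  have p: "p Q \<in> K \<inter> Q" if "Q \<in> \<V>" for Q
    unfolding p_def using V(4) that by (metis ex_in_conv someI_ex)
  show ?thesis
  proof (intro exI[of _ V] conjI allI impI)
    fix C assume C: "compact C \<and> C \<subseteq> V"
    have "compact (C \<union> p ` \<V>)" using C V(3) by (simp add: compact_Un finite_imp_compact)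
    moreover have "C \<union> p ` \<V> \<subseteq> V" using C p V(2) by blast
    moreover have "\<forall>Q\<in>\<V>. (C \<union> p ` \<V>) \<inter> Q \<noteq> {}" using p by blast
    ultimately have "C \<union> p ` \<V> \<in> \<U>" using V(5) by blast
    then show "C \<in> \<U>" using assms(2) C unfolding hereditary_compacts_def compacts_def by blast
  qed (use V in auto)
qed

lemma dense_finite:
  fixes \<U> :: "'a::topological_space set set"
  assumes "vietoris closure_of \<U> = topspace vietoris" "finite J"
    and "\<And>j. j \<in> J \<Longrightarrow> open (B j) \<and> x j \<in> B j"
  shows "\<exists>K\<in>\<U>. K \<subseteq> (\<Union>j\<in>J. B j) \<and> (\<forall>j\<in>J. K \<inter> B j \<noteq> {})"
proof -
  have "\<Union>vsub = (compacts :: 'a set set)"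
  proof
    show "\<Union>vsub \<subseteq> (compacts :: 'a set set)"
    proof (rule Union_least)
      fix s :: "'a set set" assume "s \<in> vsub"
      then show "s \<subseteq> compacts" by (rule vsubE) auto
    qed
    have "(compacts :: 'a set set) = {K \<in> compacts. K \<subseteq> UNIV}" by simp
    then show "(compacts :: 'a set set) \<subseteq> \<Union>vsub" using vsub1[of UNIV]
      by (metis Union_upper open_UNIV)
  qed
  then have top: "topspace vietoris = (compacts :: 'a set set)"
    unfolding vietoris_vsub by simp
  define N where "N = \<Inter>(insert {K \<in> compacts. K \<subseteq> (\<Union>j\<in>J. B j)} ((\<lambda>j. {K \<in> compacts. K \<inter> B j \<noteq> {}}) ` J))"
  have "generate_topology_on vsub N"
    unfolding N_def
  proof (rule generate_topology_on_Inter)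
    show "finite (insert {K \<in> compacts. K \<subseteq> (\<Union>j\<in>J. B j)} ((\<lambda>j. {K \<in> compacts. K \<inter> B j \<noteq> {}}) ` J))"
      using assms(2) by simp
    fix S assume "S \<in> insert {K \<in> compacts. K \<subseteq> (\<Union>j\<in>J. B j)} ((\<lambda>j. {K \<in> compacts. K \<inter> B j \<noteq> {}}) ` J)"
    then show "generate_topology_on vsub S"
    proof
      assume "S = {K \<in> compacts. K \<subseteq> (\<Union>j\<in>J. B j)}"
      then show ?thesis using assms(3) by (auto intro!: generate_topology_on.Basis vsub1)
    next
      assume "S \<in> (\<lambda>j. {K \<in> compacts. K \<inter> B j \<noteq> {}}) ` J"
      then show ?thesis using assms(3) by (auto intro!: generate_topology_on.Basis vsub2)
    qed
  qed simp
  then have opN: "openin vietoris N" unfolding vietoris_vsub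
    by (simp add: openin_topology_generated_by_iff)
  have xc: "x ` J \<in> compacts" using assms(2) by (simp add: compacts_def finite_imp_compact)
  have "x ` J \<in> N" unfolding N_def using xc assms(3) by auto
  moreover have "x ` J \<in> vietoris closure_of \<U>" using assms(1) top xc by simp
  ultimately obtain K where "K \<in> \<U>" "K \<in> N" using opN unfolding in_closure_of by blast
  then show ?thesis unfolding N_def by (intro bexI[where x=K]) simp_all
qed

lemma finite_min_eps:
  assumes "finite A" "\<And>a. a \<in> A \<Longrightarrow> \<exists>d>0. P a d"
    and "\<And>a d d'. P a d \<Longrightarrow> 0 < d' \<Longrightarrow> d' \<le> d \<Longrightarrow> P a d'"
  shows "\<exists>d>(0::real). \<forall>a\<in>A. P a d"
  using assms
proof (induction A rule: finite_induct)
  case empty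
  show ?case by (rule exI[of _ 1]) simp
next
  case (insert x F)
  have "\<exists>d>0. \<forall>a\<in>F. P a d"
    by (rule insert.IH) (use insert.prems in auto)
  then obtain d1 where d1: "d1 > 0" "\<forall>a\<in>F. P a d1" by (elim exE conjE)
  have "\<exists>d>0. P x d" using insert.prems(1) by simp
  then obtain d2 where d2: "d2 > 0" "P x d2" by (elim exE conjE)
  show ?case
  proof (intro exI conjI ballI)
    show "0 < min d1 d2" using d1 d2 by simp
    fix a assume "a \<in> insert x F"
    then show "P a (min d1 d2)"
    proof
      assume "a = x"
      then show ?thesis using insert.prems(2)[OF d2(2)] d1(1) d2(1) by simp
    next
      assume "a \<in> F"
      then have "P a d1" using d1(2) by simp
      then show ?thesis using insert.prems(2) d1(1) d2(1) by simp
    qed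
  qed
qed

lemma P_facts:
  assumes "M \<in> prob_measures"
  shows "prob_space M" "sets M = sets borel" "space M = UNIV"
proof -
  have *: "prob_space M \<and> sets M = sets borel" using assms unfolding prob_measures_def by simp
  then show "prob_space M" "sets M = sets borel" by simp_all
  show "space M = UNIV" using sets_eq_imp_space_eq[of M borel] * by simp
qed

lemma P_int:
  assumes "M \<in> prob_measures" "f \<in> borel_measurable borel" "\<And>x. \<bar>f x\<bar> \<le> (B::real)"
  shows "integrable M (f :: 'a::topological_space \<Rightarrow> real)"
proof -
  interpret prob_space M using P_facts[OF assms(1)] by simp
  show ?thesis
  proof (rule integrable_const_bound[of _ B])
    show "AE x in M. norm (f x) \<le> B" using assms(3) by (intro AE_I2) simp
    show "f \<in> borel_measurable M"
      using assms(2) measurable_cong_sets[OF P_facts(2)[OF assms(1)], of "borel :: real measure" borel] by simp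
  qed
qed

lemma weak_topspace: "topspace weak_topology = (prob_measures :: 'a::topological_space measure set)"
proof -
  have "prob_measures \<in> {{M \<in> prob_measures. (\<integral>x. f x \<partial>M) \<in> V} | f V.
        continuous_on UNIV (f :: 'a \<Rightarrow> real) \<and> bounded (range f) \<and> open V}"
    by (rule CollectI, rule exI[of _ "\<lambda>_. 0"], rule exI[of _ UNIV]) auto
  moreover have "\<Union>{{M \<in> prob_measures. (\<integral>x. f x \<partial>M) \<in> V} | f V.
        continuous_on UNIV (f :: 'a \<Rightarrow> real) \<and> bounded (range f) \<and> open V} \<subseteq> prob_measures"
    by (rule Union_least) blast
  ultimately show ?thesis unfolding weak_topology_def topology_generated_by_topspace
    by (intro equalityI) (assumption, erule Union_upper)
qed

lemma weak_open_basic: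
  fixes f :: "'a::topological_space \<Rightarrow> real"
  assumes "continuous_on UNIV f" "bounded (range f)" "open V"
  shows "openin weak_topology {M \<in> prob_measures. (\<integral>x. f x \<partial>M) \<in> V}"
  unfolding weak_topology_def
  by (rule topology_generated_by_Basis, rule CollectI, rule exI[of _ f], rule exI[of _ V]) (use assms in simp)

lemma interior_G:
  fixes \<U> :: "'a::polish_space set set"
  assumes "openin vietoris \<U>" "hereditary_compacts \<U>" "\<epsilon> > 0"
    and F: "F \<in> \<U>" "finite F" and \<nu>: "\<nu> \<in> prob_measures" "measure \<nu> F = 1"
  shows "\<nu> \<in> weak_topology interior_of {\<mu> \<in> prob_measures. \<exists>K\<in>\<U>. measure \<mu> K \<ge> 1 - \<epsilon>}"
proof -
  obtain V where V: "open V" "F \<subseteq> V" "\<And>C. compact C \<Longrightarrow> C \<subseteq> V \<Longrightarrow> C \<in> \<U>"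
    using hered_open[OF assms(1,2) F(1)] by (elim exE conjE) (simp add: subset_eq)
  have Fne: "F \<noteq> {}" using \<nu>(2) by (cases "F = {}") simp_all
  have "\<exists>r>0. \<forall>y\<in>F. ball y r \<subseteq> V"
  proof (rule finite_min_eps[OF F(2)])
    fix y assume "y \<in> F"
    then have "y \<in> V" using V(2) by (simp add: subset_iff)
    then show "\<exists>d>0. ball y d \<subseteq> V" using open_contains_ball_eq[OF V(1)] by simp
  next
    fix y d d' assume "ball y d \<subseteq> V" "0 < (d'::real)" "d' \<le> d"
    then show "ball y d' \<subseteq> V" using subset_ball[of d' d y] by (rule_tac order.trans) simp_all
  qed
  then obtain r where r: "r > 0" "\<forall>y\<in>F. ball y r \<subseteq> V" by (elim exE conjE)
  define h where "h x = max 0 (1 - infdist x F / r)" for x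
  have hcont: "continuous_on UNIV h" unfolding h_def
    by (intro continuous_intros) (use r in simp)
  have h01: "0 \<le> h x" "h x \<le> 1" for x
    unfolding h_def using infdist_nonneg[of x F] r by (simp_all add: field_simps)
  have hbd: "bounded (range h)"
  proof (rule boundedI[of _ 1])
    fix z assume "z \<in> range h"
    then obtain x where "z = h x" by (elim rangeE)
    then show "norm z \<le> 1" using h01[of x] by simp
  qed
  have hF: "indicator F x \<le> h x" for x
  proof (cases "x \<in> F")
    case True then show ?thesis unfolding h_def by simp
  next
    case False then show ?thesis using h01[of x] by simp
  qed
  have hV: "h x \<le> indicator V x" for x
  proof (cases "x \<in> V")
    case True then show ?thesis using h01[of x] by simp
  next
    case False
    have "infdist x F \<ge> r"
    proof (rule ccontr)
      assume "\<not> r \<le> infdist x F"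
      then have "(INF a\<in>F. dist x a) < r" using Fne by (simp add: infdist_notempty)
      moreover have "bdd_below ((\<lambda>a. dist x a) ` F)" by (rule bdd_belowI[of _ 0]) auto
      ultimately obtain y where "y \<in> F" "dist x y < r"
        using cINF_less_iff[OF Fne] by blast
      then have "x \<in> ball y r" "ball y r \<subseteq> V" using r(2) by (simp_all add: dist_commute)
      then have "x \<in> V" by (rule subsetD[rotated])
      then show False using False by simp
    qed
    then have "h x = 0" unfolding h_def using r by (simp add: field_simps)
    then show ?thesis by simp
  qed
  have hmeas: "h \<in> borel_measurable borel" by (rule borel_measurable_continuous_onI[OF hcont])
  define W where "W = {M \<in> prob_measures. (\<integral>x. h x \<partial>M) \<in> {1 - \<epsilon> <..}}"
  have Wopen: "openin weak_topology W" unfolding W_def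
    by (rule weak_open_basic[OF hcont hbd]) simp
  have "\<nu> \<in> W"
  proof -
    interpret prob_space \<nu> using P_facts[OF \<nu>(1)] by simp
    have Fm: "(indicator F :: _ \<Rightarrow> real) \<in> borel_measurable (borel :: 'a measure)"
      using F(2) by (intro borel_measurable_indicator) (simp add: finite_imp_closed borel_closed)
    have "(1::real) = (\<integral>x. indicator F x \<partial>\<nu>)" using \<nu> P_facts[OF \<nu>(1)] Bochner_Integration.integral_indicator[of \<nu> F] by simp
    also have "\<dots> \<le> (\<integral>x. h x \<partial>\<nu>)"
    proof (rule integral_mono)
      show "integrable \<nu> (indicator F :: _ \<Rightarrow> real)" by (rule P_int[OF \<nu>(1) Fm, of 1]) (simp add: indicator_def)
      show "integrable \<nu> h" by (rule P_int[OF \<nu>(1) hmeas, of 1]) (use h01 in simp)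
    qed (rule hF)
    finally show ?thesis unfolding W_def using \<nu>(1) assms(3) by simp
  qed
  moreover have "W \<subseteq> {\<mu> \<in> prob_measures. \<exists>K\<in>\<U>. measure \<mu> K \<ge> 1 - \<epsilon>}"
  proof
    fix \<rho> assume "\<rho> \<in> W"
    then have \<rho>: "\<rho> \<in> prob_measures" "(\<integral>x. h x \<partial>\<rho>) > 1 - \<epsilon>" unfolding W_def by simp_all
    interpret prob_space \<rho> using P_facts[OF \<rho>(1)] by simp
    have Vm: "(indicator V :: _ \<Rightarrow> real) \<in> borel_measurable (borel :: 'a measure)"
      using V(1) by (intro borel_measurable_indicator) simp
    have "(\<integral>x. h x \<partial>\<rho>) \<le> (\<integral>x. indicator V x \<partial>\<rho>)"
    proof (rule integral_mono)
      show "integrable \<rho> (indicator V :: _ \<Rightarrow> real)" by (rule P_int[OF \<rho>(1) Vm, of 1]) (simp add: indicator_def)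
      show "integrable \<rho> h" by (rule P_int[OF \<rho>(1) hmeas, of 1]) (use h01 in simp)
    qed (rule hV)
    also have "\<dots> = measure \<rho> V" using P_facts[OF \<rho>(1)] Bochner_Integration.integral_indicator[of \<rho> V] by simp
    finally have mV: "measure \<rho> V > 1 - \<epsilon>" using \<rho>(2) by simp
    show "\<rho> \<in> {\<mu> \<in> prob_measures. \<exists>K\<in>\<U>. measure \<mu> K \<ge> 1 - \<epsilon>}"
    proof (cases "1 - \<epsilon> \<le> 0")
      case True
      have "{} \<in> \<U>" using V(3)[of "{}"] by simp
      then show ?thesis using \<rho>(1) True by (intro CollectI conjI bexI[of _ "{}"]) simp_all
    next
      case False
      have "ennreal (1 - \<epsilon>) < emeasure \<rho> V"
        using mV False by (simp add: emeasure_eq_measure ennreal_less_iff)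
      also have "emeasure \<rho> V = (SUP K \<in> {K. K \<subseteq> V \<and> compact K}. emeasure \<rho> K)"
        by (rule inner_regular) (use P_facts[OF \<rho>(1)] V(1) in simp_all)
      finally obtain K where K: "K \<in> {K. K \<subseteq> V \<and> compact K}" "ennreal (1 - \<epsilon>) < emeasure \<rho> K"
        unfolding less_SUP_iff by (elim bexE) simp
      then have "1 - \<epsilon> < measure \<rho> K" using False
        by (simp add: emeasure_eq_measure ennreal_less_iff)
      moreover have "K \<in> \<U>" using K(1) V(3) by simp
      ultimately show ?thesis using \<rho>(1) by (intro CollectI conjI bexI[of _ K]) simp_all
    qed
  qed
  ultimately show ?thesis using Wopen interior_of_maximal[of W] by (simp add: subset_iff)
qed

fun gsel :: "('b \<Rightarrow> 'a set) \<Rightarrow> ('b \<Rightarrow> 'a) \<Rightarrow> 'a \<Rightarrow> 'b list \<Rightarrow> 'a \<Rightarrow> 'a" where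
  "gsel Bf y d [] z = d"
| "gsel Bf y d (t#ts) z = (if z \<in> Bf t then y t else gsel Bf y d ts z)"

lemma gsel_in: "d \<in> A \<Longrightarrow> (\<forall>t\<in>set ts. y t \<in> A) \<Longrightarrow> gsel Bf y d ts z \<in> A"
  by (induction ts) simp_all

lemma gsel_cover: "z \<in> (\<Union>t\<in>set ts. Bf t) \<Longrightarrow> \<exists>t\<in>set ts. z \<in> Bf t \<and> gsel Bf y d ts z = y t"
  by (induction ts) auto

lemma gsel_meas:
  "(\<forall>t\<in>set ts. Bf t \<in> sets borel) \<Longrightarrow> (\<lambda>z. gsel Bf y d ts z) \<in> borel_measurable borel"
proof (induction ts)
  case Nil
  then show ?case by simp
next
  case (Cons t ts)
  then have "(\<lambda>z. gsel Bf y d ts z) \<in> borel_measurable borel" by simp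
  moreover have "Bf t \<inter> space borel \<in> sets borel" using Cons.prems by simp
  ultimately have "(\<lambda>z. if z \<in> Bf t then y t else gsel Bf y d ts z) \<in> borel_measurable borel"
    by (intro measurable_If_set measurable_const) simp_all
  then show ?case by simp
qed

lemma approx:
  fixes \<U> :: "'a::polish_space set set" and \<Phi> :: "('a \<Rightarrow> real) set" and \<eta> B :: real
  assumes dense: "vietoris closure_of \<U> = topspace vietoris" and hered: "hereditary_compacts \<U>"
    and \<mu>: "\<mu> \<in> prob_measures" and \<Phi>: "finite \<Phi>"
    and \<Phi>c: "\<And>f. f \<in> \<Phi> \<Longrightarrow> continuous_on UNIV f \<and> (\<forall>x. \<bar>f x\<bar> \<le> B)"
    and \<eta>: "\<eta> > 0" and B: "B > 0"
  shows "\<exists>F g. F \<in> \<U> \<and> finite F \<and> g \<in> borel_measurable borel \<and> (\<forall>x. g x \<in> F) \<and>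
     (\<forall>f\<in>\<Phi>. \<bar>(\<integral>x. f (g x) \<partial>\<mu>) - (\<integral>x. f x \<partial>\<mu>)\<bar> < \<eta>)"
proof -
  interpret prob_space \<mu> using P_facts[OF \<mu>] by simp
  have sp: "space \<mu> = UNIV" and se: "sets \<mu> = sets borel" using P_facts[OF \<mu>] by simp_all
  define \<delta> where "\<delta> = min (1/2) (\<eta> / (4*B))"
  have \<delta>: "\<delta> > 0" "\<delta> \<le> 1/2" "2 * B * \<delta> \<le> \<eta>/2" unfolding \<delta>_def using \<eta> B
    by (simp_all add: field_simps min_def)
  have "ennreal (1 - \<delta>) < emeasure \<mu> UNIV"
    using \<delta> sp emeasure_space_1 by (simp add: ennreal_lessI)
  also have "emeasure \<mu> UNIV = (SUP K \<in> {K. K \<subseteq> UNIV \<and> compact K}. emeasure \<mu> K)"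
    by (rule inner_regular) (use se sp in simp_all)
  finally obtain K where K: "K \<in> {K. K \<subseteq> UNIV \<and> compact K}" "ennreal (1 - \<delta>) < emeasure \<mu> K"
    unfolding less_SUP_iff by (elim bexE) simp
  have Kc: "compact K" using K(1) by simp
  have mK: "1 - \<delta> < measure \<mu> K" using K(2) \<delta>
    by (simp add: emeasure_eq_measure ennreal_less_iff)
  have Kne: "K \<noteq> {}" using mK \<delta> by (cases "K = {}") simp_all
  have Kev: "K \<in> sets \<mu>" using Kc se by (simp add: compact_imp_closed borel_closed)
  have mcK: "measure \<mu> (UNIV - K) < \<delta>" using prob_compl[OF Kev] sp mK by simp
  have ex_d: "\<exists>d>0. \<forall>f\<in>\<Phi>. \<forall>y. dist y x < d \<longrightarrow> \<bar>f y - f x\<bar> < \<eta>/4" for x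
  proof (rule finite_min_eps[OF \<Phi>])
    fix f assume "f \<in> \<Phi>"
    then have "continuous_on UNIV f" using \<Phi>c by simp
    then have "\<forall>e>0. \<exists>d>0. \<forall>x'\<in>UNIV. dist x' x < d \<longrightarrow> dist (f x') (f x) < e"
      unfolding continuous_on_iff by simp
    then have "\<exists>d>0. \<forall>x'\<in>UNIV. dist x' x < d \<longrightarrow> dist (f x') (f x) < \<eta>/4" using \<eta> by (drule_tac spec[of _ "\<eta>/4"]) simp
    then show "\<exists>d>0. \<forall>y. dist y x < d \<longrightarrow> \<bar>f y - f x\<bar> < \<eta>/4" by (simp add: dist_real_def)
  qed simp
  have "\<forall>x. \<exists>d>0. \<forall>f\<in>\<Phi>. \<forall>y. dist y x < 2*d \<longrightarrow> \<bar>f y - f x\<bar> < \<eta>/4"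
  proof
    fix x
    obtain d where "d > 0" "\<forall>f\<in>\<Phi>. \<forall>y. dist y x < d \<longrightarrow> \<bar>f y - f x\<bar> < \<eta>/4"
      using ex_d[of x] by (elim exE conjE)
    then show "\<exists>d>0. \<forall>f\<in>\<Phi>. \<forall>y. dist y x < 2*d \<longrightarrow> \<bar>f y - f x\<bar> < \<eta>/4"
      by (intro exI[of _ "d/2"]) simp
  qed
  from choice[OF this] obtain rr where rr0: "\<forall>x. rr x > 0 \<and> (\<forall>f\<in>\<Phi>. \<forall>y. dist y x < 2 * rr x \<longrightarrow> \<bar>f y - f x\<bar> < \<eta>/4)"
    by (elim exE)
  have rr: "\<And>x. rr x > 0"
    "\<And>x f y. f \<in> \<Phi> \<Longrightarrow> dist y x < 2 * rr x \<Longrightarrow> \<bar>f y - f x\<bar> < \<eta>/4"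
    using rr0 by simp_all
  have cov: "K \<subseteq> (\<Union>x\<in>K. ball x (rr x))"
  proof
    fix x assume "x \<in> K"
    moreover have "x \<in> ball x (rr x)" using rr(1)[of x] by simp
    ultimately show "x \<in> (\<Union>x\<in>K. ball x (rr x))" by (rule UN_I)
  qed
  obtain T where T: "T \<subseteq> K" "finite T" "K \<subseteq> (\<Union>t\<in>T. ball t (rr t))"
    by (rule compactE_image[OF Kc, of K "\<lambda>x. ball x (rr x)", OF _ cov]) simp_all
  have Tne: "T \<noteq> {}" using T(3) Kne by auto
  have "\<exists>K'\<in>\<U>. K' \<subseteq> (\<Union>t\<in>T. ball t (rr t)) \<and> (\<forall>t\<in>T. K' \<inter> ball t (rr t) \<noteq> {})"
    by (rule dense_finite[OF dense T(2), of "\<lambda>t. ball t (rr t)" "\<lambda>t. t"]) (simp add: rr(1))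
  then obtain K' where K': "K' \<in> \<U>" "K' \<subseteq> (\<Union>t\<in>T. ball t (rr t))" "\<forall>t\<in>T. K' \<inter> ball t (rr t) \<noteq> {}"
    by (elim bexE conjE)
  have "\<forall>t\<in>T. \<exists>z. z \<in> K' \<inter> ball t (rr t)" using K'(3) by blast
  from bchoice[OF this] obtain y where y0: "\<forall>t\<in>T. y t \<in> K' \<inter> ball t (rr t)"
    by (elim exE)
  have y: "\<And>t. t \<in> T \<Longrightarrow> y t \<in> K' \<inter> ball t (rr t)" using y0 by simp
  define F where "F = y ` T"
  have Ffin: "finite F" unfolding F_def using T(2) by simp
  have FK': "F \<subseteq> K'" unfolding F_def using y by auto
  have FU: "F \<in> \<U>" using hered K'(1) FK' Ffin
    unfolding hereditary_compacts_def compacts_def by (simp add: finite_imp_compact)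
  obtain ts where ts: "set ts = T" using finite_list[OF T(2)] by (elim exE)
  obtain t0 where t0: "t0 \<in> T" using Tne by blast
  define g where "g = gsel (\<lambda>t. ball t (rr t)) y (y t0) ts"
  have gF: "g x \<in> F" for x unfolding g_def F_def
    by (rule gsel_in) (use t0 ts in auto)
  have gm: "g \<in> borel_measurable borel" unfolding g_def
    using gsel_meas[where ts=ts and Bf="\<lambda>t. ball t (rr t)" and y=y and d="y t0"] by simp
  have est: "\<bar>(\<integral>x. f (g x) \<partial>\<mu>) - (\<integral>x. f x \<partial>\<mu>)\<bar> < \<eta>" if f: "f \<in> \<Phi>" for f
  proof -
    have fc: "continuous_on UNIV f" and fB: "\<And>x. \<bar>f x\<bar> \<le> B" using \<Phi>c[OF f] by simp_all
    have fm: "f \<in> borel_measurable borel" by (rule borel_measurable_continuous_onI[OF fc])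
    have fgm: "(\<lambda>x. f (g x)) \<in> borel_measurable borel" using fm gm by (rule measurable_compose[rotated])
    have i1: "integrable \<mu> (\<lambda>x. f (g x))" by (rule P_int[OF \<mu> fgm, of B]) (simp add: fB)
    have i2: "integrable \<mu> f" by (rule P_int[OF \<mu> fm, of B]) (simp add: fB)
    have cKm: "(indicator (UNIV - K) :: _ \<Rightarrow> real) \<in> borel_measurable borel"
      using Kc by (intro borel_measurable_indicator) (simp add: compact_imp_closed borel_closed sets.compl_sets)
    define b where "b x = \<eta>/2 + 2 * B * indicator (UNIV - K) x" for x
    have bm: "b \<in> borel_measurable borel" unfolding b_def using cKm by simp
    have i3: "integrable \<mu> b" by (rule P_int[OF \<mu> bm, of "\<eta>/2 + 2*B"]) (use \<eta> B in \<open>simp add: b_def indicator_def\<close>)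
    have pw: "\<bar>f (g x) - f x\<bar> \<le> b x" for x
    proof (cases "x \<in> K")
      case True
      have "x \<in> (\<Union>t\<in>set ts. ball t (rr t))" using T(3) ts True by (simp add: subset_iff)
      then have "\<exists>t\<in>set ts. x \<in> ball t (rr t) \<and> g x = y t"
        unfolding g_def by (rule gsel_cover)
      then obtain t where t: "t \<in> set ts" "x \<in> ball t (rr t)" "g x = y t"
        by (elim bexE conjE)
      have tT: "t \<in> T" using t(1) ts by simp
      have "dist x t < 2 * rr t" using t(2) rr(1)[of t] by (simp add: dist_commute)
      then have 1: "\<bar>f x - f t\<bar> < \<eta>/4" using rr(2)[OF f] by simp
      have "dist (y t) t < 2 * rr t" using y[OF tT] rr(1)[of t] by (simp add: dist_commute)
      then have 2: "\<bar>f (y t) - f t\<bar> < \<eta>/4" using rr(2)[OF f] by simp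
      have "b x = \<eta>/2" using True by (simp add: b_def)
      then show ?thesis using 1 2 t(3) by (simp only:)
    next
      case False
      have "b x = \<eta>/2 + 2*B" using False by (simp add: b_def)
      then show ?thesis using fB[of x] fB[of "g x"] \<eta> by simp
    qed
    have "(\<integral>x. b x \<partial>\<mu>) = \<eta>/2 + 2 * B * measure \<mu> (UNIV - K)"
    proof -
      have iK: "integrable \<mu> (indicator (UNIV - K) :: _ \<Rightarrow> real)"
        by (rule P_int[OF \<mu> cKm, where B=1]) (simp add: indicator_def)
      have ic: "integrable \<mu> (\<lambda>x. 2 * B * indicator (UNIV - K) x)"
        by (rule P_int[OF \<mu> borel_measurable_times[OF borel_measurable_const cKm], where B="2*B"])
          (use B in \<open>simp add: indicator_def\<close>)
      have "(\<integral>x. b x \<partial>\<mu>) = (\<integral>x. \<eta>/2 \<partial>\<mu>) + (\<integral>x. 2 * B * indicator (UNIV - K) x \<partial>\<mu>)"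
        unfolding b_def by (rule Bochner_Integration.integral_add) (simp_all add: ic iK)
      also have "\<dots> = \<eta>/2 + 2 * B * measure \<mu> (UNIV - K)"
        using sp Bochner_Integration.integral_indicator[of \<mu> "UNIV - K"] prob_space by simp
      finally show ?thesis .
    qed
    also have "\<dots> < \<eta>"
    proof -
      have "2 * B * measure \<mu> (UNIV - K) < 2 * B * \<delta>"
        using mcK B by (intro mult_strict_left_mono) simp_all
      then show ?thesis using \<delta>(3) by linarith
    qed
    finally have ib: "(\<integral>x. b x \<partial>\<mu>) < \<eta>" .
    have "(\<integral>x. f (g x) \<partial>\<mu>) - (\<integral>x. f x \<partial>\<mu>) = (\<integral>x. f (g x) - f x \<partial>\<mu>)"
      using i1 i2 by simp
    also have "\<dots> \<le> (\<integral>x. b x \<partial>\<mu>)"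
      by (rule integral_mono) (use i1 i2 i3 pw in \<open>simp_all add: abs_le_iff\<close>)
    finally have u: "(\<integral>x. f (g x) \<partial>\<mu>) - (\<integral>x. f x \<partial>\<mu>) \<le> (\<integral>x. b x \<partial>\<mu>)" .
    have "(\<integral>x. f x \<partial>\<mu>) - (\<integral>x. f (g x) \<partial>\<mu>) = (\<integral>x. f x - f (g x) \<partial>\<mu>)"
      using i1 i2 by simp
    also have "\<dots> \<le> (\<integral>x. b x \<partial>\<mu>)"
      by (rule integral_mono) (use i1 i2 i3 pw in \<open>simp_all add: abs_le_iff\<close>)
    finally have l: "(\<integral>x. f x \<partial>\<mu>) - (\<integral>x. f (g x) \<partial>\<mu>) \<le> (\<integral>x. b x \<partial>\<mu>)" .
    show ?thesis using u l ib by simp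
  qed
  show ?thesis
    by (intro exI[of _ F] exI[of _ g] conjI allI ballI FU Ffin gm gF est)
qed

lemma gen_nbhd:
  assumes "generate_topology_on S W" "x \<in> W"
  shows "\<exists>F. finite F \<and> F \<subseteq> S \<and> x \<in> \<Inter>F \<and> \<Inter>F \<subseteq> W"
  using assms
proof (induction arbitrary: x rule: generate_topology_on.induct)
  case Empty
  then show ?case by simp
next
  case (Int a b)
  then have "x \<in> a" "x \<in> b" by simp_all
  obtain F1 where 1: "finite F1" "F1 \<subseteq> S" "x \<in> \<Inter>F1" "\<Inter>F1 \<subseteq> a"
    using Int.IH(1)[OF \<open>x \<in> a\<close>] by (elim exE conjE)
  obtain F2 where 2: "finite F2" "F2 \<subseteq> S" "x \<in> \<Inter>F2" "\<Inter>F2 \<subseteq> b"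
    using Int.IH(2)[OF \<open>x \<in> b\<close>] by (elim exE conjE)
  show ?case
  proof (intro exI[of _ "F1 \<union> F2"] conjI)
    show "finite (F1 \<union> F2)" using 1 2 by simp
    show "F1 \<union> F2 \<subseteq> S" using 1 2 by simp
    show "x \<in> \<Inter>(F1 \<union> F2)" using 1(3) 2(3) by blast
    show "\<Inter>(F1 \<union> F2) \<subseteq> a \<inter> b" using 1(4) 2(4) by auto
  qed
next
  case (UN K)
  then obtain k where k: "k \<in> K" "x \<in> k" by (elim UnionE)
  then obtain F where "finite F" "F \<subseteq> S" "x \<in> \<Inter>F" "\<Inter>F \<subseteq> k"
    using UN.IH[OF k] by (elim exE conjE)
  then show ?case using k(1)
    by (intro exI[of _ F] conjI) (simp_all, blast)
next
  case (Basis s)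
  then show ?case by (intro exI[of _ "{s}"]) simp
qed

lemma density:
  fixes \<U> :: "'a::polish_space set set"
  assumes op: "openin vietoris \<U>" and dense: "vietoris closure_of \<U> = topspace vietoris"
    and hered: "hereditary_compacts \<U>" and \<epsilon>: "\<epsilon> > 0"
    and W: "openin weak_topology W" and \<mu>W: "\<mu> \<in> W"
  shows "\<exists>\<nu>\<in>W. \<nu> \<in> weak_topology interior_of {\<mu> \<in> prob_measures. \<exists>K\<in>\<U>. measure \<mu> K \<ge> 1 - \<epsilon>}"
proof -
  define S where "S = {{M \<in> prob_measures. (\<integral>x. f x \<partial>M) \<in> V} | f V.
        continuous_on UNIV (f :: 'a \<Rightarrow> real) \<and> bounded (range f) \<and> open V}"
  have "generate_topology_on S W" using W unfolding weak_topology_def S_def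
    by (rule openin_topology_generated_by)
  then obtain \<F> where \<F>: "finite \<F>" "\<F> \<subseteq> S" "\<mu> \<in> \<Inter>\<F>" "\<Inter>\<F> \<subseteq> W"
    using gen_nbhd \<mu>W by (metis)
  have "\<forall>A\<in>\<F>. \<exists>p. A = {M \<in> prob_measures. (\<integral>x. fst p x \<partial>M) \<in> (snd p :: real set)} \<and>
        continuous_on UNIV (fst p) \<and> bounded (range (fst p)) \<and> open (snd p)"
  proof
    fix A assume "A \<in> \<F>"
    then have "A \<in> S" using \<F>(2) by (rule subsetD[rotated])
    then obtain f V where "A = {M \<in> prob_measures. (\<integral>x. f x \<partial>M) \<in> V}"
        "continuous_on UNIV (f :: 'a \<Rightarrow> real)" "bounded (range f)" "open V"
      unfolding S_def by (elim CollectE exE conjE)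
    then show "\<exists>p. A = {M \<in> prob_measures. (\<integral>x. fst p x \<partial>M) \<in> (snd p :: real set)} \<and>
        continuous_on UNIV (fst p) \<and> bounded (range (fst p)) \<and> open (snd p)"
      by (intro exI[of _ "(f, V)"]) simp
  qed
  from bchoice[OF this] obtain p where p0: "\<forall>A\<in>\<F>. A = {M \<in> prob_measures. (\<integral>x. fst (p A) x \<partial>M) \<in> (snd (p A) :: real set)} \<and>
        continuous_on UNIV (fst (p A)) \<and> bounded (range (fst (p A))) \<and> open (snd (p A))"
    by (elim exE)
  define ff where "ff A = fst (p A)" for A
  define VV where "VV A = snd (p A)" for A
  have p: "\<And>A. A \<in> \<F> \<Longrightarrow> A = {M \<in> prob_measures. (\<integral>x. ff A x \<partial>M) \<in> VV A}"
    "\<And>A. A \<in> \<F> \<Longrightarrow> continuous_on UNIV (ff A)"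
    "\<And>A. A \<in> \<F> \<Longrightarrow> bounded (range (ff A))"
    "\<And>A. A \<in> \<F> \<Longrightarrow> open (VV A)"
    using p0 unfolding ff_def VV_def by simp_all
  have \<mu>P: "\<mu> \<in> prob_measures" using W \<mu>W openin_subset weak_topspace by blast
  have inV: "(\<integral>x. ff A x \<partial>\<mu>) \<in> VV A" if "A \<in> \<F>" for A
  proof -
    have "\<mu> \<in> A" using \<F>(3) that by simp
    then have "\<mu> \<in> {M \<in> prob_measures. (\<integral>x. ff A x \<partial>M) \<in> VV A}"
      by (subst (asm) p(1)[OF that])
    then show ?thesis by simp
  qed
  have "\<exists>\<eta>>0. \<forall>A\<in>\<F>. \<forall>t. dist t (\<integral>x. ff A x \<partial>\<mu>) < \<eta> \<longrightarrow> t \<in> VV A"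
  proof (rule finite_min_eps[OF \<F>(1)])
    fix A assume A: "A \<in> \<F>"
    obtain e where "e > 0" "ball (\<integral>x. ff A x \<partial>\<mu>) e \<subseteq> VV A"
      using open_contains_ball_eq[OF p(4)[OF A], THEN iffD1, OF inV[OF A]] by (elim exE conjE)
    then show "\<exists>d>0. \<forall>t. dist t (\<integral>x. ff A x \<partial>\<mu>) < d \<longrightarrow> t \<in> VV A"
      by (intro exI[of _ e]) (auto simp: dist_commute)
  qed simp
  then obtain \<eta> where \<eta>: "\<eta> > 0" "\<forall>A\<in>\<F>. \<forall>t. dist t (\<integral>x. ff A x \<partial>\<mu>) < \<eta> \<longrightarrow> t \<in> VV A"
    by (elim exE conjE)
  have "\<exists>d>0. \<forall>A\<in>\<F>. \<forall>x. \<bar>ff A x\<bar> \<le> 1/d"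
  proof (rule finite_min_eps[OF \<F>(1)])
    fix A assume A: "A \<in> \<F>"
    obtain b where b: "b > 0" "\<forall>z\<in>range (ff A). norm z \<le> b"
      using p(3)[OF A] unfolding bounded_pos by (elim exE conjE)
    show "\<exists>d>0. \<forall>x. \<bar>ff A x\<bar> \<le> 1/d"
      by (intro exI[of _ "1/b"]) (use b in simp)
  next
    fix A d d' assume "\<forall>x. \<bar>ff A x\<bar> \<le> 1/d" "0 < (d'::real)" "d' \<le> d"
    moreover have "1/d \<le> 1/d'" using calculation(2,3) by (simp add: frac_le)
    ultimately show "\<forall>x. \<bar>ff A x\<bar> \<le> 1/d'" by (meson order.trans)
  qed
  then obtain d where d: "d > 0" "\<forall>A\<in>\<F>. \<forall>x. \<bar>ff A x\<bar> \<le> 1/d" by (elim exE conjE)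
  have "\<exists>F g. F \<in> \<U> \<and> finite F \<and> g \<in> borel_measurable borel \<and> (\<forall>x. g x \<in> F) \<and>
     (\<forall>f\<in>ff ` \<F>. \<bar>(\<integral>x. f (g x) \<partial>\<mu>) - (\<integral>x. f x \<partial>\<mu>)\<bar> < \<eta>)"
  proof (rule approx[OF dense hered \<mu>P _ _ \<eta>(1), where B="1/d"])
    show "finite (ff ` \<F>)" using \<F>(1) by simp
    fix f assume "f \<in> ff ` \<F>"
    then obtain A where "A \<in> \<F>" "f = ff A" by (elim imageE)
    then show "continuous_on UNIV f \<and> (\<forall>x. \<bar>f x\<bar> \<le> 1/d)" using p(2) d(2) by simp
  qed (use d in simp)
  then obtain F g where Fg: "F \<in> \<U>" "finite F" "g \<in> borel_measurable borel" "\<forall>x. g x \<in> F"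
     "\<forall>f\<in>ff ` \<F>. \<bar>(\<integral>x. f (g x) \<partial>\<mu>) - (\<integral>x. f x \<partial>\<mu>)\<bar> < \<eta>"
    by (elim exE conjE)
  interpret prob_space \<mu> using P_facts[OF \<mu>P] by simp
  have gm: "g \<in> measurable \<mu> borel"
    using Fg(3) measurable_cong_sets[OF P_facts(2)[OF \<mu>P], of "borel :: 'a measure" borel] by simp
  define \<nu> where "\<nu> = distr \<mu> borel g"
  have \<nu>P: "\<nu> \<in> prob_measures" unfolding \<nu>_def prob_measures_def
    using prob_space_distr[OF gm] by simp
  have \<nu>F: "measure \<nu> F = 1"
  proof -
    have "measure \<nu> F = measure \<mu> (g -` F \<inter> space \<mu>)" unfolding \<nu>_def
      by (rule measure_distr[OF gm]) (simp add: Fg(2) finite_imp_closed borel_closed)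
    also have "g -` F \<inter> space \<mu> = space \<mu>" using Fg(4) by auto
    finally show ?thesis by (simp add: prob_space)
  qed
  have "\<nu> \<in> W"
  proof -
    have "\<nu> \<in> \<Inter>\<F>"
    proof
      fix A assume A: "A \<in> \<F>"
      have fm: "ff A \<in> borel_measurable borel" by (rule borel_measurable_continuous_onI[OF p(2)[OF A]])
      have "(\<integral>x. ff A x \<partial>\<nu>) = (\<integral>x. ff A (g x) \<partial>\<mu>)" unfolding \<nu>_def
        by (rule integral_distr[OF gm fm])
      moreover have "\<bar>(\<integral>x. ff A (g x) \<partial>\<mu>) - (\<integral>x. ff A x \<partial>\<mu>)\<bar> < \<eta>" using Fg(5) A by simp
      ultimately have "dist (\<integral>x. ff A x \<partial>\<nu>) (\<integral>x. ff A x \<partial>\<mu>) < \<eta>" by (simp add: dist_real_def)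
      then have "(\<integral>x. ff A x \<partial>\<nu>) \<in> VV A" using \<eta>(2) A by simp
      then show "\<nu> \<in> A" using \<nu>P by (subst p(1)[OF A]) simp
    qed
    then show ?thesis using \<F>(4) by (rule subsetD[rotated])
  qed
  moreover have "\<nu> \<in> weak_topology interior_of {\<mu> \<in> prob_measures. \<exists>K\<in>\<U>. measure \<mu> K \<ge> 1 - \<epsilon>}"
    by (rule interior_G[OF op hered \<epsilon> Fg(1,2) \<nu>P \<nu>F])
  ultimately show ?thesis by (rule bexI[rotated])
qed

theorem lemma3:
  fixes \<U> :: "'a::polish_space set set" and \<epsilon> :: real
  assumes "\<U> \<subseteq> compacts"
    and "openin vietoris \<U>"
    and "vietoris closure_of \<U> = topspace vietoris"
    and "hereditary_compacts \<U>"
    and "\<epsilon> > 0"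
  shows "comeager_in weak_topology
           {\<mu> \<in> prob_measures. \<exists>K\<in>\<U>. measure \<mu> K \<ge> 1 - \<epsilon>}"
proof -
  define G where "G = {\<mu> \<in> prob_measures. \<exists>K\<in>\<U>. measure \<mu> K \<ge> 1 - \<epsilon>}"
  define I where "I = weak_topology interior_of G"
  have top: "topspace weak_topology = (prob_measures :: 'a measure set)" by (rule weak_topspace)
  have IG: "I \<subseteq> G" unfolding I_def by (rule interior_of_subset)
  have GP: "G \<subseteq> prob_measures" unfolding G_def by blast
  have Iop: "openin weak_topology I" unfolding I_def by simp
  have cl: "closedin weak_topology (prob_measures - I)"
    unfolding top[symmetric] by (rule closedin_diff[OF closedin_topspace Iop])
  have nd: "nowhere_dense_in weak_topology (prob_measures - I)"
    unfolding nowhere_dense_in_def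
  proof (intro conjI)
    show "prob_measures - I \<subseteq> topspace weak_topology" using top by simp
    have "weak_topology closure_of (prob_measures - I) = prob_measures - I"
      using cl by (simp add: closure_of_eq)
    moreover have "weak_topology interior_of (prob_measures - I) = {}"
    proof (rule ccontr)
      assume "weak_topology interior_of (prob_measures - I) \<noteq> {}"
      then obtain \<mu> where \<mu>: "\<mu> \<in> weak_topology interior_of (prob_measures - I)" by blast
      have "\<exists>\<nu>\<in>weak_topology interior_of (prob_measures - I). \<nu> \<in> weak_topology interior_of {\<mu> \<in> prob_measures. \<exists>K\<in>\<U>. measure \<mu> K \<ge> 1 - \<epsilon>}"
        by (rule density[OF assms(2,3,4,5) openin_interior_of \<mu>])
      then obtain \<nu> where "\<nu> \<in> weak_topology interior_of (prob_measures - I)"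
          "\<nu> \<in> weak_topology interior_of {\<mu> \<in> prob_measures. \<exists>K\<in>\<U>. measure \<mu> K \<ge> 1 - \<epsilon>}"
        by (elim bexE)
      moreover have "weak_topology interior_of {\<mu> \<in> prob_measures. \<exists>K\<in>\<U>. measure \<mu> K \<ge> 1 - \<epsilon>} = I"
        unfolding I_def G_def ..
      ultimately have "\<nu> \<in> weak_topology interior_of (prob_measures - I)" "\<nu> \<in> I" by simp_all
      then show False using interior_of_subset[of weak_topology "prob_measures - I"] by blast
    qed
    ultimately show "weak_topology interior_of (weak_topology closure_of (prob_measures - I)) = {}"
      by simp
  qed
  have "meager_in weak_topology (prob_measures - G)"
    unfolding meager_in_def
  proof (intro exI[of _ "{prob_measures - I}"] conjI)
    show "countable {prob_measures - I}" by simp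
    show "\<forall>N\<in>{prob_measures - I}. nowhere_dense_in weak_topology N" using nd by simp
    show "prob_measures - G \<subseteq> \<Union>{prob_measures - I}" using IG by blast
  qed
  then show ?thesis unfolding comeager_in_def G_def[symmetric] top using GP by simp
qed

end
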